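(* Assume $a+b\le1$. Then the marginal law $\nu$ of $\omega$ under $\mathbf P$, viewed as a measure on subsets of $\mathsf E$, satisfies the FKG lattice condition: $\nu(\xi_1\cap\xi_2)\,\nu(\xi_1\cup\xi_2)\ge\nu(\xi_1)\,\nu(\xi_2)$ for all $\xi_1,\xi_2\subseteq\mathsf E$.
   Context: Let $M$ be a compact orientable surface without boundary, or the plane. Let $\mathsf G=(\mathsf V,\mathsf E)$ be a finite connected graph embedded in $M$ with all faces topological discs, and $\mathsf G^*=(\mathsf U,\mathsf E^* )$ its embedded dual ($\mathsf U$ = faces of $\mathsf G$); $e^*$ is the dual edge crossing $e$, $\xi^*=\{e^*:e\in\xi\}$. Fix integers $q,q'\ge1$, finite $Q,Q'\subset\mathbb C$ with $Q=-Q$, $Q'=-Q'$, $|Q|=q$, $|Q'|=q'$, and $a,b\in(0,1]$. For $\sigma:\mathsf V\to Q$, $\eta(\sigma)\subseteq\mathsf E^*$ is the set of $e^*$ whose primal $e$ has endpoints with different $\sigma$-values; for $\sigma':\mathsf U\to Q'$, $\eta(\sigma')\subseteq\mathsf E$ is the set of $e$ whose dual $e^*$ has endpoints with different $\sigma'$-values. $\mathbf P(\sigma,\sigma')\propto a^{|\eta(\sigma')|}b^{|\eta(\sigma)|}$ on $\Sigma=\{(\sigma,\sigma'):\eta(\sigma)^*\cap\eta(\sigma')=\emptyset\}$. Percolation (for $a+b\le1$): given $(\sigma,\sigma')$, every edge of $\eta(\sigma')$ and every dual edge of $\eta(\sigma)$ is open; for each pair $(e,e^* )$ with $e\notin\eta(\sigma')$,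 $e^*\notin\eta(\sigma)$, independently, ($e$ open, $e^*$ closed) w.p. $a$, ($e$ closed, $e^*$ open) w.p. $b$, both open w.p. $1-a-b$. $\omega\subseteq\mathsf E$ is the set of open primal edges; $\mathbf P$ is the joint law. *)

theory Defs
  imports "HOL-Analysis.Analysis"
begin

text \<open>
  Cellularly embedded graphs on compact orientable surfaces are encoded
  combinatorially by rotation systems (combinatorial maps, Heffter--Edmonds):
  a finite set of darts D, a fixed-point-free involution alpha (the two halves
  of an edge) and a permutation rho (cyclic order of darts around a vertex).  The dual edge e* of the edge e = {d, alpha d} joins the faces
  of d and of alpha d; we index dual edges by the primal edge they cross.
\<close>

definition orb :: "('d \<Rightarrow> 'd) \<Rightarrow> 'd \<Rightarrow> 'd set" where
  "orb f d = {(f ^^ n) d | n. True}"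

definition comb_map :: "'d set \<Rightarrow> ('d \<Rightarrow> 'd) \<Rightarrow> ('d \<Rightarrow> 'd) \<Rightarrow> bool" where
  "comb_map D alpha rho \<longleftrightarrow>
     finite D \<and> bij_betw alpha D D \<and> bij_betw rho D D \<and>
     (\<forall>d\<in>D. alpha d \<noteq> d \<and> alpha (alpha d) = d) \<and>
     (\<forall>d\<in>D. \<forall>d'\<in>D.
        (d, d') \<in> ({(x, rho x) | x. x \<in> D} \<union> {(x, alpha x) | x. x \<in> D})\<^sup>*)"

definition map_vertices :: "'d set \<Rightarrow> ('d \<Rightarrow> 'd) \<Rightarrow> 'd set set" where
  "map_vertices D rho = {orb rho d | d. d \<in> D}"

definition map_faces :: "'d set \<Rightarrow> ('d \<Rightarrow> 'd) \<Rightarrow> ('d \<Rightarrow> 'd) \<Rightarrow> 'd set set" where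
  "map_faces D alpha rho = {orb (rho \<circ> alpha) d | d. d \<in> D}"

definition map_edges :: "'d set \<Rightarrow> ('d \<Rightarrow> 'd) \<Rightarrow> 'd set set" where
  "map_edges D alpha = {{d, alpha d} | d. d \<in> D}"

definition etaV :: "'d set \<Rightarrow> ('d \<Rightarrow> 'd) \<Rightarrow> ('d \<Rightarrow> 'd) \<Rightarrow> ('d set \<Rightarrow> complex) \<Rightarrow> 'd set set" where
  "etaV D alpha rho s = {e \<in> map_edges D alpha. \<exists>d\<in>e. s (orb rho d) \<noteq> s (orb rho (alpha d))}"

definition etaU :: "'d set \<Rightarrow> ('d \<Rightarrow> 'd) \<Rightarrow> ('d \<Rightarrow> 'd) \<Rightarrow> ('d set \<Rightarrow> complex) \<Rightarrow> 'd set set" where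
  "etaU D alpha rho s' = {e \<in> map_edges D alpha.
      \<exists>d\<in>e. s' (orb (rho \<circ> alpha) d) \<noteq> s' (orb (rho \<circ> alpha) (alpha d))}"

definition spin_pairs ::
  "'d set \<Rightarrow> ('d \<Rightarrow> 'd) \<Rightarrow> ('d \<Rightarrow> 'd) \<Rightarrow> complex set \<Rightarrow> complex set
     \<Rightarrow> (('d set \<Rightarrow> complex) \<times> ('d set \<Rightarrow> complex)) set" where
  "spin_pairs D alpha rho Q Q' =
     {(s, s'). s \<in> (map_vertices D rho \<rightarrow>\<^sub>E Q) \<and> s' \<in> (map_faces D alpha rho \<rightarrow>\<^sub>E Q') \<and>
               etaV D alpha rho s \<inter> etaU D alpha rho s' = {}}"

definition spin_weight ::
  "'d set \<Rightarrow> ('d \<Rightarrow> 'd) \<Rightarrow> ('d \<Rightarrow> 'd) \<Rightarrow> real \<Rightarrow> real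
     \<Rightarrow> ('d set \<Rightarrow> complex) \<Rightarrow> ('d set \<Rightarrow> complex) \<Rightarrow> real" where
  "spin_weight D alpha rho a b s s' =
     a ^ card (etaU D alpha rho s') * b ^ card (etaV D alpha rho s)"

definition spin_law ::
  "'d set \<Rightarrow> ('d \<Rightarrow> 'd) \<Rightarrow> ('d \<Rightarrow> 'd) \<Rightarrow> complex set \<Rightarrow> complex set \<Rightarrow> real \<Rightarrow> real
     \<Rightarrow> ('d set \<Rightarrow> complex) \<Rightarrow> ('d set \<Rightarrow> complex) \<Rightarrow> real" where
  "spin_law D alpha rho Q Q' a b s s' =
     (if (s, s') \<in> spin_pairs D alpha rho Q Q' then
        spin_weight D alpha rho a b s s' /
        (\<Sum>(t, t')\<in>spin_pairs D alpha rho Q Q'. spin_weight D alpha rho a b t t')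
      else 0)"

text \<open>Conditional probability that the set of open primal edges equals omega,
  given (sigma, sigma'): edges of eta(sigma') are open, edges whose dual is in
  eta(sigma) are closed (only their dual is declared open), and every other
  edge is open with probability a + (1 - a - b) (states (open,closed) and
  (open,open)) and closed with probability b, independently.\<close>
definition perc_cond ::
  "'d set \<Rightarrow> ('d \<Rightarrow> 'd) \<Rightarrow> ('d \<Rightarrow> 'd) \<Rightarrow> real \<Rightarrow> real
     \<Rightarrow> ('d set \<Rightarrow> complex) \<Rightarrow> ('d set \<Rightarrow> complex) \<Rightarrow> 'd set set \<Rightarrow> real" where
  "perc_cond D alpha rho a b s s' omega =
     (\<Prod>e\<in>map_edges D alpha.
        if e \<in> etaU D alpha rho s' then (if e \<in> omega then 1 else 0)
        else if e \<in> etaV D alpha rho s then (if e \<in> omega then 0 else 1)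
        else if e \<in> omega then a + (1 - a - b) else b)"

definition omega_marginal ::
  "'d set \<Rightarrow> ('d \<Rightarrow> 'd) \<Rightarrow> ('d \<Rightarrow> 'd) \<Rightarrow> complex set \<Rightarrow> complex set \<Rightarrow> real \<Rightarrow> real
     \<Rightarrow> 'd set set \<Rightarrow> real" where
  "omega_marginal D alpha rho Q Q' a b omega =
     (\<Sum>(s, s')\<in>spin_pairs D alpha rho Q Q'.
        spin_law D alpha rho Q Q' a b s s' * perc_cond D alpha rho a b s s' omega)"

end

theory Submission
  imports Defs
begin
definition agreeset :: "'v set \<Rightarrow> 'c set \<Rightarrow> ('v \<times> 'v) set \<Rightarrow> ('v \<Rightarrow> 'c) set" where
  "agreeset W Q P = {s \<in> W \<rightarrow>\<^sub>E Q. \<forall>p\<in>P. s (fst p) = s (snd p)}"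

definition connr :: "('v \<times> 'v) set \<Rightarrow> ('v \<times> 'v) set" where
  "connr P = (P \<union> P\<inverse>)\<^sup>*"

definition recol :: "'v set \<Rightarrow> 'v set \<Rightarrow> ('v \<Rightarrow> 'c) \<Rightarrow> 'c \<Rightarrow> ('v \<Rightarrow> 'c)" where
  "recol W C t c = (\<lambda>w. if w \<in> W \<and> w \<in> C then c else t w)"

lemma agree_conn:
  assumes "s \<in> agreeset W Q P" "(x, y) \<in> connr P"
  shows "s x = s y"
  using assms(2) unfolding connr_def
proof (induction rule: rtrancl_induct)
  case base then show ?case by simp
next
  case (step y z)
  then show ?case using assms(1) unfolding agreeset_def by force
qed

lemma connr_mono: "P \<subseteq> P' \<Longrightarrow> connr P \<subseteq> connr P'"
  unfolding connr_def by (rule rtrancl_mono) blast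

lemma agreeset_anti: "P \<subseteq> P' \<Longrightarrow> agreeset W Q P' \<subseteq> agreeset W Q P"
  unfolding agreeset_def by blast

lemma agreeset_finite: "finite W \<Longrightarrow> finite Q \<Longrightarrow> finite (agreeset W Q P)"
  unfolding agreeset_def by (rule finite_subset[OF _ finite_PiE]) auto

lemma agreeset_pos:
  assumes "finite W" "finite Q" "Q \<noteq> {}" "P \<subseteq> W \<times> W"
  shows "card (agreeset W Q P) > 0"
proof -
  obtain c where c: "c \<in> Q" using assms by blast
  have "restrict (\<lambda>_. c) W \<in> agreeset W Q P"
    unfolding agreeset_def using c assms(4) by fastforce
  then show ?thesis using agreeset_finite[OF assms(1,2)] card_gt_0_iff by blast
qed

lemma agree_connected:
  assumes "(v, u) \<in> connr P"
  shows "agreeset W Q (insert (u, v) P) = agreeset W Q P"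
proof
  show "agreeset W Q (insert (u, v) P) \<subseteq> agreeset W Q P" by (rule agreeset_anti) blast
  show "agreeset W Q P \<subseteq> agreeset W Q (insert (u, v) P)"
  proof
    fix s assume s: "s \<in> agreeset W Q P"
    have "s v = s u" using agree_conn[OF s assms] .
    then show "s \<in> agreeset W Q (insert (u, v) P)" using s unfolding agreeset_def by auto
  qed
qed

lemma conn_closed:
  assumes "(v, x) \<in> connr P" "(x, y) \<in> P \<or> (y, x) \<in> P"
  shows "(v, y) \<in> connr P"
  using assms unfolding connr_def
  by (meson UnI1 UnI2 converseI rtrancl.rtrancl_into_rtrancl)

lemma agree_split:
  assumes PW: "P \<subseteq> W \<times> W" and uW: "u \<in> W" and vW: "v \<in> W"
    and nc: "(v, u) \<notin> connr P"
  shows "card (agreeset W Q (insert (u, v) P)) * card Q = card (agreeset W Q P)"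
proof -
  define C where "C = {w. (v, w) \<in> connr P}"
  have vC: "v \<in> C" unfolding C_def connr_def by simp
  have uC: "u \<notin> C" using nc unfolding C_def by simp
  have Cclosed: "x \<in> C \<longleftrightarrow> y \<in> C" if "(x, y) \<in> P" for x y
    using conn_closed[of v x P y] conn_closed[of v y P x] that unfolding C_def by auto
  let ?S' = "agreeset W Q (insert (u, v) P)"
  let ?S = "agreeset W Q P"
  let ?f = "\<lambda>(t, c). recol W C t c"
  have rec_in: "recol W C t c \<in> ?S" if t: "t \<in> ?S" and c: "c \<in> Q" for t c
  proof -
    have "recol W C t c \<in> W \<rightarrow>\<^sub>E Q"
      using t c unfolding agreeset_def recol_def by (auto simp: PiE_def Pi_def extensional_def)
    moreover have "recol W C t c (fst p) = recol W C t c (snd p)" if p: "p \<in> P" for p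
    proof -
      obtain x y where xy: "p = (x, y)" by (cases p)
      have "x \<in> W" "y \<in> W" using PW p xy by auto
      moreover have "t x = t y" using t p xy unfolding agreeset_def by force
      ultimately show ?thesis using Cclosed[of x y] p xy unfolding recol_def by auto
    qed
    ultimately show ?thesis unfolding agreeset_def by blast
  qed
  have bij: "bij_betw ?f (?S' \<times> Q) ?S"
  proof (rule bij_betwI')
    fix x y assume x: "x \<in> ?S' \<times> Q" and y: "y \<in> ?S' \<times> Q"
    obtain t1 c1 where x1: "x = (t1, c1)" by (cases x)
    obtain t2 c2 where y1: "y = (t2, c2)" by (cases y)
    have t1: "t1 \<in> ?S'" and t2: "t2 \<in> ?S'" using x y x1 y1 by auto
    have t1': "t1 \<in> ?S" and t2': "t2 \<in> ?S" using t1 t2 agreeset_anti[of P "insert (u,v) P" W Q] by auto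
    show "(?f x = ?f y) = (x = y)"
    proof
      assume eq: "?f x = ?f y"
      then have eqr: "recol W C t1 c1 w = recol W C t2 c2 w" for w using x1 y1 by simp
      have "c1 = c2" using eqr[of v] vC vW unfolding recol_def by simp
      moreover have "t1 w = t2 w" for w
      proof (cases "w \<in> W \<and> w \<in> C")
        case True
        have a1: "t1 w = t1 v" using agree_conn[OF t1'] True unfolding C_def by auto
        have a2: "t2 w = t2 v" using agree_conn[OF t2'] True unfolding C_def by auto
        have b1: "t1 u = t1 v" using t1 unfolding agreeset_def by auto
        have b2: "t2 u = t2 v" using t2 unfolding agreeset_def by auto
        have "t1 u = t2 u" using eqr[of u] uC unfolding recol_def by simp
        then show ?thesis using a1 a2 b1 b2 by simp
      next
        case False
        then show ?thesis using eqr[of w] unfolding recol_def by (auto split: if_splits)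
      qed
      ultimately show "x = y" using x1 y1 by auto
    qed simp
  next
    fix x assume "x \<in> ?S' \<times> Q"
    then show "?f x \<in> ?S" using rec_in agreeset_anti[of P "insert (u,v) P" W Q] by auto
  next
    fix s assume s: "s \<in> ?S"
    define t where "t = recol W C s (s u)"
    have sQ: "s u \<in> Q" using s uW unfolding agreeset_def by auto
    have tS: "t \<in> ?S" unfolding t_def by (rule rec_in[OF s sQ])
    have "t u = t v" unfolding t_def recol_def using uC vC vW by simp
    then have tS': "t \<in> ?S'" using tS unfolding agreeset_def by auto
    have "recol W C t (s v) = s"
    proof
      fix w show "recol W C t (s v) w = s w"
      proof (cases "w \<in> W \<and> w \<in> C")
        case True
        then show ?thesis using agree_conn[OF s, of v w] unfolding recol_def C_def by auto
      next
        case False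
        then show ?thesis unfolding recol_def t_def by auto
      qed
    qed
    moreover have "s v \<in> Q" using s vW unfolding agreeset_def by auto
    ultimately show "\<exists>x\<in>?S' \<times> Q. s = ?f x" using tS' by force
  qed
  have "card ?S = card (?S' \<times> Q)" using bij_betw_same_card[OF bij] by simp
  also have "\<dots> = card ?S' * card Q" by (rule card_cartesian_product)
  finally show ?thesis by simp
qed

lemma ratio_mono:
  assumes W: "finite W" and Q: "finite Q" "Q \<noteq> {}" and PP: "P \<subseteq> P'" and PW: "P' \<subseteq> W \<times> W"
    and uW: "u \<in> W" and vW: "v \<in> W"
  shows "card (agreeset W Q (insert (u,v) P)) * card (agreeset W Q P')
         \<le> card (agreeset W Q (insert (u,v) P')) * card (agreeset W Q P)"
proof (cases "(v, u) \<in> connr P")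
  case True
  then have "(v, u) \<in> connr P'" using connr_mono[OF PP] by blast
  have eq1: "agreeset W Q (insert (u,v) P') = agreeset W Q P'" by (rule agree_connected) fact
  have eq2: "agreeset W Q (insert (u,v) P) = agreeset W Q P" by (rule agree_connected) fact
  show ?thesis unfolding eq1 eq2 by (simp add: mult.commute)
next
  case False
  have q: "card Q > 0" using Q by (simp add: card_gt_0_iff)
  have e1: "card (agreeset W Q (insert (u,v) P)) * card Q = card (agreeset W Q P)"
    using agree_split[OF _ uW vW False] PP PW by blast
  have e2: "card (agreeset W Q P') \<le> card (agreeset W Q (insert (u,v) P')) * card Q"
  proof (cases "(v, u) \<in> connr P'")
    case True
    have eq: "agreeset W Q (insert (u,v) P') = agreeset W Q P'" by (rule agree_connected[OF True])
    have "card (agreeset W Q P') * 1 \<le> card (agreeset W Q P') * card Q"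
      by (rule mult_le_mono2) (use q in simp)
    then show ?thesis using eq by simp
  next
    case False
    have "card (agreeset W Q (insert (u,v) P')) * card Q = card (agreeset W Q P')"
      by (rule agree_split[OF PW uW vW False])
    then show ?thesis by linarith
  qed
  have "card Q * (card (agreeset W Q (insert (u,v) P)) * card (agreeset W Q P'))
        = card (agreeset W Q P) * card (agreeset W Q P')" using e1 by (simp add: mult_ac)
  also have "\<dots> \<le> card (agreeset W Q P) * (card (agreeset W Q (insert (u,v) P')) * card Q)"
    using e2 by simp
  also have "\<dots> = card Q * (card (agreeset W Q (insert (u,v) P')) * card (agreeset W Q P))"
    by (simp add: mult_ac)
  finally show ?thesis using q by simp
qed

lemma supermod_pairs:
  assumes W: "finite W" and Q: "finite Q" "Q \<noteq> {}" and T: "finite T" "T \<subseteq> W \<times> W"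
    and PP: "P \<subseteq> P'" and PW: "P' \<subseteq> W \<times> W"
  shows "card (agreeset W Q (P \<union> T)) * card (agreeset W Q P')
         \<le> card (agreeset W Q (P' \<union> T)) * card (agreeset W Q P)"
  using T
proof (induction T rule: finite_induct)
  case empty
  then show ?case by (simp add: mult.commute)
next
  case (insert t T)
  obtain u v where t: "t = (u, v)" by (cases t)
  have uv: "u \<in> W" "v \<in> W" using insert.prems t by auto
  define z1 where "z1 = card (agreeset W Q (insert t (P \<union> T)))"
  define z2 where "z2 = card (agreeset W Q (P' \<union> T))"
  define z3 where "z3 = card (agreeset W Q (insert t (P' \<union> T)))"
  define z4 where "z4 = card (agreeset W Q (P \<union> T))"
  define y1 where "y1 = card (agreeset W Q P')"
  define y2 where "y2 = card (agreeset W Q P)"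
  have r: "z1 * z2 \<le> z3 * z4" unfolding z1_def z2_def z3_def z4_def t
    by (rule ratio_mono[OF W Q]) (use PP PW insert.prems uv in auto)
  have ih: "z4 * y1 \<le> z2 * y2" using insert by (simp add: z4_def y1_def z2_def y2_def)
  have s2: "P' \<union> T \<subseteq> W \<times> W" and s4: "P \<union> T \<subseteq> W \<times> W" using PP PW insert.prems by auto
  have "z2 > 0" unfolding z2_def by (rule agreeset_pos[OF W Q s2])
  moreover have "z4 > 0" unfolding z4_def by (rule agreeset_pos[OF W Q s4])
  ultimately have pos: "z2 * z4 > 0" by simp
  have "(z1 * y1) * (z2 * z4) = (z1 * z2) * (z4 * y1)" by (simp add: mult_ac)
  also have "\<dots> \<le> (z3 * z4) * (z2 * y2)" using r ih by (rule mult_le_mono)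
  also have "\<dots> = (z3 * y2) * (z2 * z4)" by (simp add: mult_ac)
  finally have "z1 * y1 \<le> z3 * y2" using pos by simp
  then show ?case by (simp add: z1_def z3_def y1_def y2_def)
qed

lemma AD1:
  fixes a0 a1 b0 b1 c0 c1 d0 d1 :: real
  assumes nn: "0 \<le> a0" "0 \<le> a1" "0 \<le> b0" "0 \<le> b1" "0 \<le> c0" "0 \<le> c1" "0 \<le> d0" "0 \<le> d1"
    and h00: "a0 * b0 \<le> c0 * d0" and h01: "a0 * b1 \<le> c0 * d1" and h10: "a1 * b0 \<le> c0 * d1"
    and h11: "a1 * b1 \<le> c1 * d1"
  shows "(a0 + a1) * (b0 + b1) \<le> (c0 + c1) * (d0 + d1)"
proof -
  define w where "w = c0 * d1"
  define u where "u = a0 * b1"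
  define v where "v = a1 * b0"
  define z where "z = c1 * d0"
  have u0: "0 \<le> u" and v0: "0 \<le> v" and z0: "0 \<le> z" using nn by (simp_all add: u_def v_def z_def)
  have uw: "u \<le> w" and vw: "v \<le> w" using h01 h10 by (simp_all add: u_def v_def w_def)
  have uv: "u * v \<le> w * z"
  proof -
    have "u * v = (a0 * b0) * (a1 * b1)" by (simp add: u_def v_def mult_ac)
    also have "\<dots> \<le> (c0 * d0) * (c1 * d1)"
      by (rule mult_mono[OF h00 h11]) (use nn in simp_all)
    also have "\<dots> = w * z" by (simp add: w_def z_def mult_ac)
    finally show ?thesis .
  qed
  have key: "u + v \<le> w + z"
  proof (cases "w = 0")
    case True
    then show ?thesis using uw vw u0 v0 z0 by simp
  next
    case False
    then have wp: "w > 0" using uw u0 by simp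
    have "0 \<le> (w - u) * (w - v)" using uw vw by simp
    then have "w * (u + v) \<le> w * w + u * v" by (simp add: algebra_simps)
    also have "\<dots> \<le> w * w + w * z" using uv by simp
    finally have "w * (u + v) \<le> w * (w + z)" by (simp add: algebra_simps)
    then show ?thesis using wp by simp
  qed
  have "(a0 + a1) * (b0 + b1) = a0 * b0 + (u + v) + a1 * b1" by (simp add: u_def v_def algebra_simps)
  also have "\<dots> \<le> c0 * d0 + (w + z) + c1 * d1" using h00 h11 key by linarith
  also have "\<dots> = (c0 + c1) * (d0 + d1)" by (simp add: w_def z_def algebra_simps)
  finally show ?thesis .
qed

lemma sum_Pow_insert:
  assumes "finite F" "x \<notin> F"
  shows "sum f (Pow (insert x F)) = (\<Sum>A\<in>Pow F. f A + f (insert x A))"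
proof -
  have "sum f (Pow (insert x F)) = sum f (Pow F) + sum f (insert x ` Pow F)"
    unfolding Pow_insert by (rule sum.union_disjoint) (use assms in auto)
  also have "sum f (insert x ` Pow F) = (\<Sum>A\<in>Pow F. f (insert x A))"
    by (subst sum.reindex) (use assms in \<open>auto intro!: inj_onI simp: o_def\<close>)
  finally show ?thesis by (simp add: sum.distrib)
qed

lemma AD:
  fixes f1 f2 f3 f4 :: "'a set \<Rightarrow> real"
  assumes "finite E"
    and "\<And>A B. A \<subseteq> E \<Longrightarrow> B \<subseteq> E \<Longrightarrow> f1 A * f2 B \<le> f3 (A \<inter> B) * f4 (A \<union> B)"
    and "\<And>A. A \<subseteq> E \<Longrightarrow> 0 \<le> f1 A \<and> 0 \<le> f2 A \<and> 0 \<le> f3 A \<and> 0 \<le> f4 A"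
  shows "sum f1 (Pow E) * sum f2 (Pow E) \<le> sum f3 (Pow E) * sum f4 (Pow E)"
  using assms
proof (induction E arbitrary: f1 f2 f3 f4 rule: finite_induct)
  case empty
  then show ?case by simp
next
  case (insert x F)
  define g1 where "g1 A = f1 A + f1 (insert x A)" for A
  define g2 where "g2 A = f2 A + f2 (insert x A)" for A
  define g3 where "g3 A = f3 A + f3 (insert x A)" for A
  define g4 where "g4 A = f4 A + f4 (insert x A)" for A
  have nn: "0 \<le> f1 A \<and> 0 \<le> f2 A \<and> 0 \<le> f3 A \<and> 0 \<le> f4 A" if "A \<subseteq> insert x F" for A
    using insert.prems(2) that by blast
  have main: "sum g1 (Pow F) * sum g2 (Pow F) \<le> sum g3 (Pow F) * sum g4 (Pow F)"
  proof (rule insert.IH)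
    fix A B assume A: "A \<subseteq> F" and B: "B \<subseteq> F"
    have xA: "x \<notin> A" and xB: "x \<notin> B" using A B insert.hyps by auto
    have s1: "insert x A \<inter> B = A \<inter> B" "A \<inter> insert x B = A \<inter> B"
      "insert x A \<inter> insert x B = insert x (A \<inter> B)"
      "insert x A \<union> B = insert x (A \<union> B)" "A \<union> insert x B = insert x (A \<union> B)"
      "insert x A \<union> insert x B = insert x (A \<union> B)" using xA xB by auto
    have AE: "A \<subseteq> insert x F" "insert x A \<subseteq> insert x F" "B \<subseteq> insert x F" "insert x B \<subseteq> insert x F"
      using A B by auto
    have h00: "f1 A * f2 B \<le> f3 (A \<inter> B) * f4 (A \<union> B)" using insert.prems(1) AE by blast
    have h01: "f1 A * f2 (insert x B) \<le> f3 (A \<inter> B) * f4 (insert x (A \<union> B))"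
      using insert.prems(1)[OF AE(1) AE(4)] s1 by simp
    have h10: "f1 (insert x A) * f2 B \<le> f3 (A \<inter> B) * f4 (insert x (A \<union> B))"
      using insert.prems(1)[OF AE(2) AE(3)] s1 by simp
    have h11: "f1 (insert x A) * f2 (insert x B) \<le> f3 (insert x (A \<inter> B)) * f4 (insert x (A \<union> B))"
      using insert.prems(1)[OF AE(2) AE(4)] s1 by simp
    have AB: "A \<inter> B \<subseteq> insert x F" "insert x (A \<inter> B) \<subseteq> insert x F"
      "A \<union> B \<subseteq> insert x F" "insert x (A \<union> B) \<subseteq> insert x F" using A B by auto
    show "g1 A * g2 B \<le> g3 (A \<inter> B) * g4 (A \<union> B)"
      unfolding g1_def g2_def g3_def g4_def
    proof (rule AD1[OF _ _ _ _ _ _ _ _ h00 h01 h10 h11])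
      show "0 \<le> f1 A" using nn[OF AE(1)] by simp
      show "0 \<le> f1 (insert x A)" using nn[OF AE(2)] by simp
      show "0 \<le> f2 B" using nn[OF AE(3)] by simp
      show "0 \<le> f2 (insert x B)" using nn[OF AE(4)] by simp
      show "0 \<le> f3 (A \<inter> B)" using nn[OF AB(1)] by simp
      show "0 \<le> f3 (insert x (A \<inter> B))" using nn[OF AB(2)] by simp
      show "0 \<le> f4 (A \<union> B)" using nn[OF AB(3)] by simp
      show "0 \<le> f4 (insert x (A \<union> B))" using nn[OF AB(4)] by simp
    qed
  next
    fix A assume A: "A \<subseteq> F"
    have "A \<subseteq> insert x F" "insert x A \<subseteq> insert x F" using A by auto
    then show "0 \<le> g1 A \<and> 0 \<le> g2 A \<and> 0 \<le> g3 A \<and> 0 \<le> g4 A"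
      unfolding g1_def g2_def g3_def g4_def using nn by (meson add_nonneg_nonneg)
  qed
  have e1: "sum f1 (Pow (insert x F)) = sum g1 (Pow F)"
    unfolding g1_def by (rule sum_Pow_insert[OF insert.hyps])
  have e2: "sum f2 (Pow (insert x F)) = sum g2 (Pow F)"
    unfolding g2_def by (rule sum_Pow_insert[OF insert.hyps])
  have e3: "sum f3 (Pow (insert x F)) = sum g3 (Pow F)"
    unfolding g3_def by (rule sum_Pow_insert[OF insert.hyps])
  have e4: "sum f4 (Pow (insert x F)) = sum g4 (Pow F)"
    unfolding g4_def by (rule sum_Pow_insert[OF insert.hyps])
  show ?case unfolding e1 e2 e3 e4 by (rule main)
qed

definition pairs :: "('d \<Rightarrow> 'v) \<Rightarrow> ('d \<Rightarrow> 'd) \<Rightarrow> 'd set set \<Rightarrow> ('v \<times> 'v) set" where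
  "pairs pm alpha A = (\<lambda>d. (pm d, pm (alpha d))) ` (\<Union>A)"

lemma pairs_mono: "A \<subseteq> B \<Longrightarrow> pairs pm alpha A \<subseteq> pairs pm alpha B"
  unfolding pairs_def by (intro image_mono Union_mono)

lemma pairs_Un: "pairs pm alpha (A \<union> B) = pairs pm alpha A \<union> pairs pm alpha B"
  unfolding pairs_def by (simp add: Union_Un_distrib image_Un)

lemma eta_pairs:
  assumes "X \<subseteq> E"
  shows "({e \<in> E. \<exists>d\<in>e. s (pm d) \<noteq> s (pm (alpha d))} \<inter> X = {})
         \<longleftrightarrow> (\<forall>p\<in>pairs pm alpha X. s (fst p) = s (snd p))"
proof -
  have "({e \<in> E. \<exists>d\<in>e. s (pm d) \<noteq> s (pm (alpha d))} \<inter> X = {})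
        \<longleftrightarrow> (\<forall>e\<in>X. \<forall>d\<in>e. s (pm d) = s (pm (alpha d)))"
    using assms by auto
  also have "\<dots> \<longleftrightarrow> (\<forall>d\<in>\<Union>X. s (pm d) = s (pm (alpha d)))" by auto
  also have "\<dots> \<longleftrightarrow> (\<forall>p\<in>pairs pm alpha X. s (fst p) = s (snd p))"
    unfolding pairs_def by simp
  finally show ?thesis .
qed

lemma Z_supermod:
  assumes W: "finite W" and Q: "finite Q" "Q \<noteq> {}"
    and PW: "\<And>d. d \<in> \<Union>E \<Longrightarrow> (pm d, pm (alpha d)) \<in> W \<times> W"
    and fin: "finite (\<Union>E)" and A: "A \<subseteq> E" and B: "B \<subseteq> E"
  shows "card (agreeset W Q (pairs pm alpha A)) * card (agreeset W Q (pairs pm alpha B))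
         \<le> card (agreeset W Q (pairs pm alpha (A \<inter> B))) * card (agreeset W Q (pairs pm alpha (A \<union> B)))"
proof -
  have sub: "pairs pm alpha X \<subseteq> W \<times> W" if "X \<subseteq> E" for X
  proof
    fix p assume "p \<in> pairs pm alpha X"
    then obtain d where d: "d \<in> \<Union>X" "p = (pm d, pm (alpha d))" unfolding pairs_def by blast
    then have "d \<in> \<Union>E" using that by blast
    then show "p \<in> W \<times> W" using PW d(2) by simp
  qed
  have "\<Union>B \<subseteq> \<Union>E" using B by blast
  then have "finite (\<Union>B)" by (rule finite_subset[OF _ fin])
  then have finB: "finite (pairs pm alpha B)" unfolding pairs_def by (rule finite_imageI)
  have m: "pairs pm alpha (A \<inter> B) \<subseteq> pairs pm alpha A" by (rule pairs_mono) blast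
  have i1: "card (agreeset W Q (pairs pm alpha (A \<inter> B) \<union> pairs pm alpha B)) * card (agreeset W Q (pairs pm alpha A))
     \<le> card (agreeset W Q (pairs pm alpha A \<union> pairs pm alpha B)) * card (agreeset W Q (pairs pm alpha (A \<inter> B)))"
    by (rule supermod_pairs[OF W Q finB sub[OF B] m sub[OF A]])
  have e1: "pairs pm alpha (A \<inter> B) \<union> pairs pm alpha B = pairs pm alpha B"
    using pairs_mono[of "A \<inter> B" B] by blast
  have e2: "pairs pm alpha A \<union> pairs pm alpha B = pairs pm alpha (A \<union> B)" by (rule pairs_Un[symmetric])
  from i1 have i2: "card (agreeset W Q (pairs pm alpha B)) * card (agreeset W Q (pairs pm alpha A))
     \<le> card (agreeset W Q (pairs pm alpha (A \<union> B))) * card (agreeset W Q (pairs pm alpha (A \<inter> B)))"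
    unfolding e1 e2 .
  then show ?thesis by (metis mult.commute)
qed

lemma binom_sets:
  fixes a c :: real
  assumes Z: "finite Z" and XY: "X \<subseteq> Y" and YZ: "Y \<subseteq> Z"
  shows "a ^ card X * (a + c) ^ card (Y - X)
         = (\<Sum>\<theta>\<in>Pow Z. if X \<subseteq> \<theta> \<and> \<theta> \<subseteq> Y then a ^ card \<theta> * c ^ card (Y - \<theta>) else 0)"
proof -
  have finY: "finite Y" using Z YZ finite_subset by blast
  have finX: "finite X" using finY XY finite_subset by blast
  have "(a + c) ^ card (Y - X) = (\<Prod>x\<in>Y - X. a + c)" by simp
  also have "\<dots> = (\<Sum>T\<in>Pow (Y - X). (\<Prod>x\<in>T. a) * (\<Prod>x\<in>Y - X - T. c))"
    by (rule prod_add) (use finY in simp)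
  also have "\<dots> = (\<Sum>T\<in>Pow (Y - X). a ^ card T * c ^ card (Y - X - T))" by simp
  finally have "a ^ card X * (a + c) ^ card (Y - X)
      = (\<Sum>T\<in>Pow (Y - X). a ^ card X * (a ^ card T * c ^ card (Y - X - T)))"
    by (simp add: sum_distrib_left)
  also have "\<dots> = (\<Sum>T\<in>Pow (Y - X). a ^ card (X \<union> T) * c ^ card (Y - (X \<union> T)))"
  proof (rule sum.cong)
    fix T assume T: "T \<in> Pow (Y - X)"
    have finT: "finite T" using T finY finite_subset by auto
    have "card (X \<union> T) = card X + card T" using T finX finT by (subst card_Un_disjoint) auto
    moreover have "Y - (X \<union> T) = Y - X - T" by blast
    ultimately show "a ^ card X * (a ^ card T * c ^ card (Y - X - T)) = a ^ card (X \<union> T) * c ^ card (Y - (X \<union> T))"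
      by (simp add: power_add)
  qed simp
  also have "\<dots> = (\<Sum>\<theta>\<in>(\<lambda>T. X \<union> T) ` Pow (Y - X). a ^ card \<theta> * c ^ card (Y - \<theta>))"
  proof (rule sum.reindex[symmetric, unfolded comp_def])
    show "inj_on (\<lambda>T. X \<union> T) (Pow (Y - X))"
    proof (rule inj_onI)
      fix T1 T2 assume "T1 \<in> Pow (Y - X)" "T2 \<in> Pow (Y - X)" "X \<union> T1 = X \<union> T2"
      then have "T1 = (X \<union> T1) - X" "T2 = (X \<union> T2) - X" "X \<union> T1 = X \<union> T2" by auto
      then show "T1 = T2" by simp
    qed
  qed
  also have "(\<lambda>T. X \<union> T) ` Pow (Y - X) = {\<theta> \<in> Pow Z. X \<subseteq> \<theta> \<and> \<theta> \<subseteq> Y}"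
  proof
    show "(\<lambda>T. X \<union> T) ` Pow (Y - X) \<subseteq> {\<theta> \<in> Pow Z. X \<subseteq> \<theta> \<and> \<theta> \<subseteq> Y}" using XY YZ by auto
    show "{\<theta> \<in> Pow Z. X \<subseteq> \<theta> \<and> \<theta> \<subseteq> Y} \<subseteq> (\<lambda>T. X \<union> T) ` Pow (Y - X)"
    proof
      fix \<theta> assume "\<theta> \<in> {\<theta> \<in> Pow Z. X \<subseteq> \<theta> \<and> \<theta> \<subseteq> Y}"
      then have "\<theta> = X \<union> (\<theta> - X)" "\<theta> - X \<in> Pow (Y - X)" by auto
      then show "\<theta> \<in> (\<lambda>T. X \<union> T) ` Pow (Y - X)" by blast
    qed
  qed
  also have "(\<Sum>\<theta>\<in>{\<theta> \<in> Pow Z. X \<subseteq> \<theta> \<and> \<theta> \<subseteq> Y}. a ^ card \<theta> * c ^ card (Y - \<theta>))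
     = (\<Sum>\<theta>\<in>Pow Z. if X \<subseteq> \<theta> \<and> \<theta> \<subseteq> Y then a ^ card \<theta> * c ^ card (Y - \<theta>) else 0)"
    by (rule sum.inter_filter) (use Z in simp)
  finally show ?thesis .
qed

lemma prod_indicator_pow:
  fixes k :: real
  assumes "finite E"
  shows "(\<Prod>e\<in>E. if e \<in> S then k else 1) = k ^ card (E \<inter> S)"
proof -
  have "(\<Prod>e\<in>E. if e \<in> S then k else 1) = prod (\<lambda>_. k) {e \<in> E. e \<in> S}"
    by (rule prod.inter_filter[symmetric]) (rule assms)
  also have "{e \<in> E. e \<in> S} = E \<inter> S" by blast
  finally show ?thesis by simp
qed

definition Fg :: "'e set \<Rightarrow> real \<Rightarrow> real \<Rightarrow> real \<Rightarrow> ('e set \<Rightarrow> real) \<Rightarrow> ('e set \<Rightarrow> real)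
   \<Rightarrow> 'e set \<Rightarrow> 'e set \<Rightarrow> real" where
  "Fg E a b c f g \<omega> \<theta> = (if \<theta> \<subseteq> \<omega> then b ^ card (E - \<omega>) * a ^ card \<theta> * c ^ card (\<omega> - \<theta>) * (f \<omega> * g (E - \<theta>)) else 0)"

lemma Fg_nonneg:
  assumes "0 \<le> a" "0 \<le> b" "0 \<le> c" "\<And>A. A \<subseteq> E \<Longrightarrow> 0 \<le> f A" "\<And>A. A \<subseteq> E \<Longrightarrow> 0 \<le> g A"
    and "\<omega> \<subseteq> E"
  shows "0 \<le> Fg E a b c f g \<omega> \<theta>"
proof -
  have "E - \<theta> \<subseteq> E" by blast
  then show ?thesis unfolding Fg_def using assms by (simp add: zero_le_mult_iff)
qed

lemma Fg_lsm:
  assumes abc: "0 \<le> a" "0 \<le> b" "0 \<le> c" and E: "finite E"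
    and fnn: "\<And>A. A \<subseteq> E \<Longrightarrow> 0 \<le> f A" and gnn: "\<And>A. A \<subseteq> E \<Longrightarrow> 0 \<le> g A"
    and fs: "\<And>A B. A \<subseteq> E \<Longrightarrow> B \<subseteq> E \<Longrightarrow> f A * f B \<le> f (A \<inter> B) * f (A \<union> B)"
    and gs: "\<And>A B. A \<subseteq> E \<Longrightarrow> B \<subseteq> E \<Longrightarrow> g A * g B \<le> g (A \<inter> B) * g (A \<union> B)"
    and w1: "\<omega>1 \<subseteq> E" and w2: "\<omega>2 \<subseteq> E"
  shows "Fg E a b c f g \<omega>1 \<theta>1 * Fg E a b c f g \<omega>2 \<theta>2
         \<le> Fg E a b c f g (\<omega>1 \<inter> \<omega>2) (\<theta>1 \<inter> \<theta>2) * Fg E a b c f g (\<omega>1 \<union> \<omega>2) (\<theta>1 \<union> \<theta>2)"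
proof (cases "\<theta>1 \<subseteq> \<omega>1 \<and> \<theta>2 \<subseteq> \<omega>2")
  case False
  have "0 \<le> Fg E a b c f g (\<omega>1 \<inter> \<omega>2) (\<theta>1 \<inter> \<theta>2)" "0 \<le> Fg E a b c f g (\<omega>1 \<union> \<omega>2) (\<theta>1 \<union> \<theta>2)"
  proof -
    have "\<omega>1 \<inter> \<omega>2 \<subseteq> E" "\<omega>1 \<union> \<omega>2 \<subseteq> E" using w1 w2 by auto
    then show "0 \<le> Fg E a b c f g (\<omega>1 \<inter> \<omega>2) (\<theta>1 \<inter> \<theta>2)" "0 \<le> Fg E a b c f g (\<omega>1 \<union> \<omega>2) (\<theta>1 \<union> \<theta>2)"
      using Fg_nonneg[of a b c E f g, OF abc fnn gnn] by auto
  qed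
  moreover have P: "Fg E a b c f g \<omega>1 \<theta>1 * Fg E a b c f g \<omega>2 \<theta>2 = 0"
    using False unfolding Fg_def by auto
  ultimately show ?thesis unfolding P by (intro mult_nonneg_nonneg)
next
  case True
  then have t1: "\<theta>1 \<subseteq> \<omega>1" and t2: "\<theta>2 \<subseteq> \<omega>2" by auto
  have t3: "\<theta>1 \<inter> \<theta>2 \<subseteq> \<omega>1 \<inter> \<omega>2" and t4: "\<theta>1 \<union> \<theta>2 \<subseteq> \<omega>1 \<union> \<omega>2" using t1 t2 by auto
  have fw1: "finite \<omega>1" and fw2: "finite \<omega>2" using w1 w2 E finite_subset by auto
  have ft1: "finite \<theta>1" and ft2: "finite \<theta>2" using t1 t2 fw1 fw2 finite_subset by auto
  define x1 where "x1 = card (E - \<omega>1)"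
  define x2 where "x2 = card (E - \<omega>2)"
  define x3 where "x3 = card (E - (\<omega>1 \<inter> \<omega>2))"
  define x4 where "x4 = card (E - (\<omega>1 \<union> \<omega>2))"
  have ex: "x1 + x2 = x3 + x4"
  proof -
    have "card (E - \<omega>1) + card (E - \<omega>2) = card ((E - \<omega>1) \<union> (E - \<omega>2)) + card ((E - \<omega>1) \<inter> (E - \<omega>2))"
      by (rule card_Un_Int) (use E in auto)
    moreover have "(E - \<omega>1) \<union> (E - \<omega>2) = E - (\<omega>1 \<inter> \<omega>2)" "(E - \<omega>1) \<inter> (E - \<omega>2) = E - (\<omega>1 \<union> \<omega>2)" by auto
    ultimately show ?thesis unfolding x1_def x2_def x3_def x4_def by simp
  qed
  have ey: "card \<theta>1 + card \<theta>2 = card (\<theta>1 \<inter> \<theta>2) + card (\<theta>1 \<union> \<theta>2)"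
    using card_Un_Int[OF ft1 ft2] by simp
  have ew: "card \<omega>1 + card \<omega>2 = card (\<omega>1 \<inter> \<omega>2) + card (\<omega>1 \<union> \<omega>2)"
    using card_Un_Int[OF fw1 fw2] by simp
  have d1: "card (\<omega>1 - \<theta>1) = card \<omega>1 - card \<theta>1" by (rule card_Diff_subset[OF ft1 t1])
  have d2: "card (\<omega>2 - \<theta>2) = card \<omega>2 - card \<theta>2" by (rule card_Diff_subset[OF ft2 t2])
  have d3: "card ((\<omega>1 \<inter> \<omega>2) - (\<theta>1 \<inter> \<theta>2)) = card (\<omega>1 \<inter> \<omega>2) - card (\<theta>1 \<inter> \<theta>2)"
    by (rule card_Diff_subset[OF _ t3]) (use ft1 in simp)
  have d4: "card ((\<omega>1 \<union> \<omega>2) - (\<theta>1 \<union> \<theta>2)) = card (\<omega>1 \<union> \<omega>2) - card (\<theta>1 \<union> \<theta>2)"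
    by (rule card_Diff_subset[OF _ t4]) (use ft1 ft2 in simp)
  have c1: "card \<theta>1 \<le> card \<omega>1" by (rule card_mono[OF fw1 t1])
  have c2: "card \<theta>2 \<le> card \<omega>2" by (rule card_mono[OF fw2 t2])
  have c3: "card (\<theta>1 \<inter> \<theta>2) \<le> card (\<omega>1 \<inter> \<omega>2)" by (rule card_mono[OF _ t3]) (use fw1 in simp)
  have c4: "card (\<theta>1 \<union> \<theta>2) \<le> card (\<omega>1 \<union> \<omega>2)" by (rule card_mono[OF _ t4]) (use fw1 fw2 in simp)
  have ez: "card (\<omega>1 - \<theta>1) + card (\<omega>2 - \<theta>2) = card ((\<omega>1 \<inter> \<omega>2) - (\<theta>1 \<inter> \<theta>2)) + card ((\<omega>1 \<union> \<omega>2) - (\<theta>1 \<union> \<theta>2))"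
    unfolding d1 d2 d3 d4 using ey ew c1 c2 c3 c4 by linarith
  define K where "K = b ^ (x1 + x2) * a ^ (card \<theta>1 + card \<theta>2) * c ^ (card (\<omega>1 - \<theta>1) + card (\<omega>2 - \<theta>2))"
  have K0: "0 \<le> K" unfolding K_def using abc by simp
  have L: "Fg E a b c f g \<omega>1 \<theta>1 * Fg E a b c f g \<omega>2 \<theta>2 = K * ((f \<omega>1 * f \<omega>2) * (g (E - \<theta>1) * g (E - \<theta>2)))"
    unfolding Fg_def K_def x1_def x2_def using t1 t2 by (simp add: power_add mult_ac)
  have R: "Fg E a b c f g (\<omega>1 \<inter> \<omega>2) (\<theta>1 \<inter> \<theta>2) * Fg E a b c f g (\<omega>1 \<union> \<omega>2) (\<theta>1 \<union> \<theta>2)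
      = K * ((f (\<omega>1 \<inter> \<omega>2) * f (\<omega>1 \<union> \<omega>2)) * (g (E - (\<theta>1 \<inter> \<theta>2)) * g (E - (\<theta>1 \<union> \<theta>2))))"
    unfolding Fg_def K_def using t3 t4 ex ey ez unfolding x1_def x2_def x3_def x4_def
    by (simp add: power_add mult_ac)
  have gg: "g (E - \<theta>1) * g (E - \<theta>2) \<le> g (E - (\<theta>1 \<inter> \<theta>2)) * g (E - (\<theta>1 \<union> \<theta>2))"
  proof -
    have "g (E - \<theta>1) * g (E - \<theta>2) \<le> g ((E - \<theta>1) \<inter> (E - \<theta>2)) * g ((E - \<theta>1) \<union> (E - \<theta>2))"
      by (rule gs) auto
    moreover have "(E - \<theta>1) \<inter> (E - \<theta>2) = E - (\<theta>1 \<union> \<theta>2)" "(E - \<theta>1) \<union> (E - \<theta>2) = E - (\<theta>1 \<inter> \<theta>2)" by auto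
    ultimately show ?thesis by (simp add: mult.commute)
  qed
  have ff: "f \<omega>1 * f \<omega>2 \<le> f (\<omega>1 \<inter> \<omega>2) * f (\<omega>1 \<union> \<omega>2)" by (rule fs[OF w1 w2])
  have "(f \<omega>1 * f \<omega>2) * (g (E - \<theta>1) * g (E - \<theta>2))
      \<le> (f (\<omega>1 \<inter> \<omega>2) * f (\<omega>1 \<union> \<omega>2)) * (g (E - (\<theta>1 \<inter> \<theta>2)) * g (E - (\<theta>1 \<union> \<theta>2)))"
  proof (rule mult_mono[OF ff gg])
    have "\<omega>1 \<inter> \<omega>2 \<subseteq> E" "\<omega>1 \<union> \<omega>2 \<subseteq> E" using w1 w2 by auto
    then show "0 \<le> f (\<omega>1 \<inter> \<omega>2) * f (\<omega>1 \<union> \<omega>2)" using fnn by simp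
    have "E - \<theta>1 \<subseteq> E" "E - \<theta>2 \<subseteq> E" by auto
    then show "0 \<le> g (E - \<theta>1) * g (E - \<theta>2)" using gnn by simp
  qed
  then show ?thesis unfolding L R using K0 by (rule mult_left_mono)
qed

lemma map_facts:
  assumes cm: "comb_map D alpha rho"
  shows "finite (map_edges D alpha)" "finite (map_vertices D rho)" "finite (map_faces D alpha rho)"
    "finite (\<Union>(map_edges D alpha))"
    "\<And>d. d \<in> \<Union>(map_edges D alpha) \<Longrightarrow> (orb rho d, orb rho (alpha d)) \<in> map_vertices D rho \<times> map_vertices D rho"
    "\<And>d. d \<in> \<Union>(map_edges D alpha) \<Longrightarrow> (orb (rho \<circ> alpha) d, orb (rho \<circ> alpha) (alpha d)) \<in> map_faces D alpha rho \<times> map_faces D alpha rho"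
proof -
  have D: "finite D" and al: "\<And>d. d \<in> D \<Longrightarrow> alpha d \<in> D"
    using cm unfolding comb_map_def by (auto dest: bij_betw_apply)
  have Eim: "map_edges D alpha = (\<lambda>d. {d, alpha d}) ` D" unfolding map_edges_def by auto
  have Vim: "map_vertices D rho = (\<lambda>d. orb rho d) ` D" unfolding map_vertices_def by auto
  have Uim: "map_faces D alpha rho = (\<lambda>d. orb (rho \<circ> alpha) d) ` D" unfolding map_faces_def by auto
  show "finite (map_edges D alpha)" unfolding Eim using D by simp
  show "finite (map_vertices D rho)" unfolding Vim using D by simp
  show "finite (map_faces D alpha rho)" unfolding Uim using D by simp
  have sub: "\<Union>(map_edges D alpha) \<subseteq> D" unfolding Eim using al by auto
  show "finite (\<Union>(map_edges D alpha))" by (rule finite_subset[OF sub D])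
  fix d assume "d \<in> \<Union>(map_edges D alpha)"
  then have d: "d \<in> D" "alpha d \<in> D" using sub al by auto
  show "(orb rho d, orb rho (alpha d)) \<in> map_vertices D rho \<times> map_vertices D rho"
    unfolding Vim using d by simp
  show "(orb (rho \<circ> alpha) d, orb (rho \<circ> alpha) (alpha d)) \<in> map_faces D alpha rho \<times> map_faces D alpha rho"
    unfolding Uim using d by simp
qed

lemma prod_closed:
  fixes a b :: real
  assumes E: "finite E" and XU: "XU \<subseteq> E" and XV: "XV \<subseteq> E" and disj: "XU \<inter> XV = {}" and om: "\<omega> \<subseteq> E"
  shows "a ^ card XU * b ^ card XV * (\<Prod>e\<in>E. if e \<in> XU then (if e \<in> \<omega> then 1 else 0)
            else if e \<in> XV then (if e \<in> \<omega> then 0 else 1) else if e \<in> \<omega> then a + (1 - a - b) else b)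
       = (if XV \<inter> \<omega> = {} then 1 else 0) * ((if XU \<subseteq> \<omega> then a ^ card XU * (1 - b) ^ card (\<omega> - XU) else 0) * b ^ card (E - \<omega>))"
    (is "?L = ?R")
proof (cases "XV \<inter> \<omega> = {} \<and> XU \<subseteq> \<omega>")
  case True
  then have c1: "XV \<inter> \<omega> = {}" and c2: "XU \<subseteq> \<omega>" by auto
  have "(\<Prod>e\<in>E. if e \<in> XU then (if e \<in> \<omega> then 1 else 0)
            else if e \<in> XV then (if e \<in> \<omega> then 0 else 1) else if e \<in> \<omega> then a + (1 - a - b) else b)
      = (\<Prod>e\<in>E. (if e \<in> \<omega> - XU then 1 - b else 1) * (if e \<in> E - \<omega> - XV then b else 1))"
  proof (rule prod.cong)
    fix e assume e: "e \<in> E"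
    show "(if e \<in> XU then (if e \<in> \<omega> then 1 else 0)
            else if e \<in> XV then (if e \<in> \<omega> then 0 else 1) else if e \<in> \<omega> then a + (1 - a - b) else b)
        = (if e \<in> \<omega> - XU then 1 - b else 1) * (if e \<in> E - \<omega> - XV then b else 1)"
      using e c1 c2 disj by auto
  qed simp
  also have "\<dots> = (\<Prod>e\<in>E. if e \<in> \<omega> - XU then 1 - b else 1) * (\<Prod>e\<in>E. if e \<in> E - \<omega> - XV then b else 1)"
    by (rule prod.distrib)
  also have "\<dots> = (1 - b) ^ card (E \<inter> (\<omega> - XU)) * b ^ card (E \<inter> (E - \<omega> - XV))"
    by (simp only: prod_indicator_pow[OF E])
  also have "E \<inter> (\<omega> - XU) = \<omega> - XU" using om by auto
  also have "E \<inter> (E - \<omega> - XV) = E - \<omega> - XV" by auto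
  finally have P: "(\<Prod>e\<in>E. if e \<in> XU then (if e \<in> \<omega> then 1 else 0)
            else if e \<in> XV then (if e \<in> \<omega> then 0 else 1) else if e \<in> \<omega> then a + (1 - a - b) else b)
      = (1 - b) ^ card (\<omega> - XU) * b ^ card (E - \<omega> - XV)" .
  have "E - \<omega> = XV \<union> (E - \<omega> - XV)" using XV c1 by auto
  then have "card (E - \<omega>) = card XV + card (E - \<omega> - XV)"
    using card_Un_disjoint[of XV "E - \<omega> - XV"] E XV finite_subset by fastforce
  then show ?thesis unfolding P using True by (simp add: power_add mult_ac)
next
  case False
  then obtain e where e: "e \<in> E" "(e \<in> XV \<and> e \<in> \<omega>) \<or> (e \<in> XU \<and> e \<notin> \<omega>)" using XU XV by auto
  have "(\<Prod>e\<in>E. if e \<in> XU then (if e \<in> \<omega> then 1 else 0)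
            else if e \<in> XV then (if e \<in> \<omega> then 0 else 1) else if e \<in> \<omega> then a + (1 - a - b) else (b::real)) = 0"
    using E e disj by (subst prod_zero_iff) auto
  moreover have "?R = 0" using False by auto
  ultimately show ?thesis by simp
qed

lemma sum_indicator_card:
  assumes "finite A"
  shows "(\<Sum>x\<in>A. if P x then (k::real) else 0) = k * real (card {x \<in> A. P x})"
proof -
  have "(\<Sum>x\<in>A. if P x then k else 0) = sum (\<lambda>_. k) {x \<in> A. P x}"
    by (rule sum.inter_filter[symmetric]) (rule assms)
  then show ?thesis by (simp add: mult.commute)
qed

lemma key_decomp:
  fixes a b :: real
  assumes cm: "comb_map D alpha rho" and Q: "finite Q" and Q': "finite Q'"
    and om: "\<omega> \<subseteq> map_edges D alpha"
  shows "(\<Sum>(s, s')\<in>spin_pairs D alpha rho Q Q'. spin_weight D alpha rho a b s s' * perc_cond D alpha rho a b s s' \<omega>)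
     = (\<Sum>\<theta>\<in>Pow (map_edges D alpha). Fg (map_edges D alpha) a b (1 - a - b)
          (\<lambda>A. real (card (agreeset (map_vertices D rho) Q (pairs (orb rho) alpha A))))
          (\<lambda>A. real (card (agreeset (map_faces D alpha rho) Q' (pairs (orb (rho \<circ> alpha)) alpha A)))) \<omega> \<theta>)"
proof -
  define E where "E = map_edges D alpha"
  define V where "V = map_vertices D rho"
  define U where "U = map_faces D alpha rho"
  define c where "c = 1 - a - b"
  define SP where "SP = spin_pairs D alpha rho Q Q'"
  define eV where "eV s = etaV D alpha rho s" for s
  define eU where "eU s = etaU D alpha rho s" for s
  define ZV where "ZV = real (card (agreeset V Q (pairs (orb rho) alpha \<omega>)))"
  define ZU where "ZU A = real (card (agreeset U Q' (pairs (orb (rho \<circ> alpha)) alpha A)))" for A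
  define Bw where "Bw = b ^ card (E - \<omega>)"
  define IV where "IV s = (if eV s \<inter> \<omega> = {} then 1 else (0::real))" for s
  define GU where "GU s' = (if eU s' \<subseteq> \<omega> then a ^ card (eU s') * (1 - b) ^ card (\<omega> - eU s') else 0)" for s'
  have finE: "finite E" and finV: "finite V" and finU: "finite U"
    using map_facts[OF cm] unfolding E_def V_def U_def by auto
  have omE: "\<omega> \<subseteq> E" using om unfolding E_def .
  have eVE: "eV s \<subseteq> E" for s unfolding eV_def etaV_def E_def by auto
  have eUE: "eU s \<subseteq> E" for s unfolding eU_def etaU_def E_def by auto
  have SPsub: "SP \<subseteq> (V \<rightarrow>\<^sub>E Q) \<times> (U \<rightarrow>\<^sub>E Q')" unfolding SP_def spin_pairs_def V_def U_def by auto
  have SPmem: "(s, s') \<in> SP \<longleftrightarrow> s \<in> V \<rightarrow>\<^sub>E Q \<and> s' \<in> U \<rightarrow>\<^sub>E Q' \<and> eV s \<inter> eU s' = {}" for s s'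
    unfolding SP_def spin_pairs_def V_def U_def eV_def eU_def by simp
  have finP: "finite ((V \<rightarrow>\<^sub>E Q) \<times> (U \<rightarrow>\<^sub>E Q'))" using finV finU Q Q' by (simp add: finite_PiE)
  have K1: "spin_weight D alpha rho a b s s' * perc_cond D alpha rho a b s s' \<omega> = IV s * (GU s' * Bw)"
    if "(s, s') \<in> SP" for s s'
  proof -
    have disj: "eU s' \<inter> eV s = {}" using that SPmem by auto
    have "spin_weight D alpha rho a b s s' * perc_cond D alpha rho a b s s' \<omega>
        = a ^ card (eU s') * b ^ card (eV s) * (\<Prod>e\<in>E. if e \<in> eU s' then (if e \<in> \<omega> then 1 else 0)
            else if e \<in> eV s then (if e \<in> \<omega> then 0 else 1) else if e \<in> \<omega> then a + (1 - a - b) else b)"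
      unfolding spin_weight_def perc_cond_def eU_def eV_def E_def by simp
    also have "\<dots> = IV s * (GU s' * Bw)"
      unfolding IV_def GU_def Bw_def by (rule prod_closed[OF finE eUE eVE disj omE])
    finally show ?thesis .
  qed
  have K2: "IV s * (GU s' * Bw) = 0" if "(s, s') \<in> (V \<rightarrow>\<^sub>E Q) \<times> (U \<rightarrow>\<^sub>E Q') - SP" for s s'
  proof -
    have "eV s \<inter> eU s' \<noteq> {}" using that SPmem by auto
    then have "\<not> (eV s \<inter> \<omega> = {} \<and> eU s' \<subseteq> \<omega>)" by auto
    then show ?thesis unfolding IV_def GU_def by auto
  qed
  have S1: "(\<Sum>(s, s')\<in>SP. spin_weight D alpha rho a b s s' * perc_cond D alpha rho a b s s' \<omega>)
      = (\<Sum>(s, s')\<in>SP. IV s * (GU s' * Bw))"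
    by (rule sum.cong) (auto simp: K1)
  also have "\<dots> = (\<Sum>(s, s')\<in>(V \<rightarrow>\<^sub>E Q) \<times> (U \<rightarrow>\<^sub>E Q'). IV s * (GU s' * Bw))"
    by (rule sum.mono_neutral_left[OF finP SPsub]) (auto simp: K2)
  also have "\<dots> = (\<Sum>s\<in>V \<rightarrow>\<^sub>E Q. \<Sum>s'\<in>U \<rightarrow>\<^sub>E Q'. IV s * (GU s' * Bw))"
    by (rule sum.cartesian_product[symmetric])
  also have "\<dots> = (\<Sum>s\<in>V \<rightarrow>\<^sub>E Q. IV s) * (\<Sum>s'\<in>U \<rightarrow>\<^sub>E Q'. GU s' * Bw)"
    by (rule sum_product[symmetric])
  finally have S2: "(\<Sum>(s, s')\<in>SP. spin_weight D alpha rho a b s s' * perc_cond D alpha rho a b s s' \<omega>)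
      = (\<Sum>s\<in>V \<rightarrow>\<^sub>E Q. IV s) * ((\<Sum>s'\<in>U \<rightarrow>\<^sub>E Q'. GU s') * Bw)"
    by (simp add: sum_distrib_right)
  have IVsum: "(\<Sum>s\<in>V \<rightarrow>\<^sub>E Q. IV s) = ZV"
  proof -
    have "(\<Sum>s\<in>V \<rightarrow>\<^sub>E Q. IV s) = 1 * real (card {s \<in> V \<rightarrow>\<^sub>E Q. eV s \<inter> \<omega> = {}})"
      unfolding IV_def by (rule sum_indicator_card) (use finV Q in \<open>simp add: finite_PiE\<close>)
    also have "{s \<in> V \<rightarrow>\<^sub>E Q. eV s \<inter> \<omega> = {}} = agreeset V Q (pairs (orb rho) alpha \<omega>)"
      unfolding agreeset_def eV_def etaV_def by (intro Collect_cong conj_cong refl eta_pairs[OF om])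
    finally show ?thesis unfolding ZV_def by simp
  qed
  have K5: "GU s' = (\<Sum>\<theta>\<in>Pow E. if eU s' \<subseteq> \<theta> \<and> \<theta> \<subseteq> \<omega> then a ^ card \<theta> * c ^ card (\<omega> - \<theta>) else 0)" for s'
  proof (cases "eU s' \<subseteq> \<omega>")
    case True
    have "a ^ card (eU s') * (a + c) ^ card (\<omega> - eU s')
        = (\<Sum>\<theta>\<in>Pow E. if eU s' \<subseteq> \<theta> \<and> \<theta> \<subseteq> \<omega> then a ^ card \<theta> * c ^ card (\<omega> - \<theta>) else 0)"
      by (rule binom_sets[OF finE True omE])
    moreover have "a + c = 1 - b" unfolding c_def by simp
    ultimately show ?thesis unfolding GU_def using True by simp
  next
    case False
    then have nt: "\<And>\<theta>. \<not> (eU s' \<subseteq> \<theta> \<and> \<theta> \<subseteq> \<omega>)" by blast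
    have "(\<Sum>\<theta>\<in>Pow E. if eU s' \<subseteq> \<theta> \<and> \<theta> \<subseteq> \<omega> then a ^ card \<theta> * c ^ card (\<omega> - \<theta>) else 0)
        = (\<Sum>\<theta>\<in>Pow E. 0)"
    proof (intro sum.cong refl)
      fix \<theta> show "(if eU s' \<subseteq> \<theta> \<and> \<theta> \<subseteq> \<omega> then a ^ card \<theta> * c ^ card (\<omega> - \<theta>) else 0) = 0"
        using nt[of \<theta>] by (simp only: if_False)
    qed
    then show ?thesis unfolding GU_def using False by simp
  qed
  have K6: "(\<Sum>s'\<in>U \<rightarrow>\<^sub>E Q'. if eU s' \<subseteq> \<theta> \<and> \<theta> \<subseteq> \<omega> then a ^ card \<theta> * c ^ card (\<omega> - \<theta>) else 0)
      = (if \<theta> \<subseteq> \<omega> then a ^ card \<theta> * c ^ card (\<omega> - \<theta>) * ZU (E - \<theta>) else 0)" if th: "\<theta> \<in> Pow E" for \<theta>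
  proof (cases "\<theta> \<subseteq> \<omega>")
    case True
    have "(\<Sum>s'\<in>U \<rightarrow>\<^sub>E Q'. if eU s' \<subseteq> \<theta> \<and> \<theta> \<subseteq> \<omega> then a ^ card \<theta> * c ^ card (\<omega> - \<theta>) else 0)
        = (\<Sum>s'\<in>U \<rightarrow>\<^sub>E Q'. if eU s' \<subseteq> \<theta> then a ^ card \<theta> * c ^ card (\<omega> - \<theta>) else 0)"
      using True by simp
    also have "\<dots> = a ^ card \<theta> * c ^ card (\<omega> - \<theta>) * real (card {s' \<in> U \<rightarrow>\<^sub>E Q'. eU s' \<subseteq> \<theta>})"
      by (rule sum_indicator_card) (use finU Q' in \<open>simp add: finite_PiE\<close>)
    also have "{s' \<in> U \<rightarrow>\<^sub>E Q'. eU s' \<subseteq> \<theta>} = agreeset U Q' (pairs (orb (rho \<circ> alpha)) alpha (E - \<theta>))"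
    proof -
      have EQ: "eU s' \<subseteq> \<theta> \<longleftrightarrow> (\<forall>p\<in>pairs (orb (rho \<circ> alpha)) alpha (E - \<theta>). s' (fst p) = s' (snd p))" for s'
      proof -
        have "eU s' \<subseteq> \<theta> \<longleftrightarrow> eU s' \<inter> (E - \<theta>) = {}" using eUE[of s'] by auto
        also have "\<dots> \<longleftrightarrow> (\<forall>p\<in>pairs (orb (rho \<circ> alpha)) alpha (E - \<theta>). s' (fst p) = s' (snd p))"
          unfolding eU_def etaU_def E_def by (rule eta_pairs) auto
        finally show ?thesis .
      qed
      show ?thesis unfolding agreeset_def using EQ by simp
    qed
    finally show ?thesis unfolding ZU_def using True by simp
  next
    case False
    then show ?thesis by simp
  qed
  have "(\<Sum>s'\<in>U \<rightarrow>\<^sub>E Q'. GU s')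
      = (\<Sum>s'\<in>U \<rightarrow>\<^sub>E Q'. \<Sum>\<theta>\<in>Pow E. if eU s' \<subseteq> \<theta> \<and> \<theta> \<subseteq> \<omega> then a ^ card \<theta> * c ^ card (\<omega> - \<theta>) else 0)"
    using K5 by simp
  also have "\<dots> = (\<Sum>\<theta>\<in>Pow E. \<Sum>s'\<in>U \<rightarrow>\<^sub>E Q'. if eU s' \<subseteq> \<theta> \<and> \<theta> \<subseteq> \<omega> then a ^ card \<theta> * c ^ card (\<omega> - \<theta>) else 0)"
    by (rule sum.swap)
  also have "\<dots> = (\<Sum>\<theta>\<in>Pow E. if \<theta> \<subseteq> \<omega> then a ^ card \<theta> * c ^ card (\<omega> - \<theta>) * ZU (E - \<theta>) else 0)"
    by (rule sum.cong) (simp_all add: K6)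
  finally have GUsum: "(\<Sum>s'\<in>U \<rightarrow>\<^sub>E Q'. GU s')
      = (\<Sum>\<theta>\<in>Pow E. if \<theta> \<subseteq> \<omega> then a ^ card \<theta> * c ^ card (\<omega> - \<theta>) * ZU (E - \<theta>) else 0)" .
  have "(\<Sum>(s, s')\<in>SP. spin_weight D alpha rho a b s s' * perc_cond D alpha rho a b s s' \<omega>)
      = ZV * ((\<Sum>\<theta>\<in>Pow E. if \<theta> \<subseteq> \<omega> then a ^ card \<theta> * c ^ card (\<omega> - \<theta>) * ZU (E - \<theta>) else 0) * Bw)"
    unfolding S2 IVsum GUsum ..
  also have "\<dots> = (\<Sum>\<theta>\<in>Pow E. ZV * ((if \<theta> \<subseteq> \<omega> then a ^ card \<theta> * c ^ card (\<omega> - \<theta>) * ZU (E - \<theta>) else 0) * Bw))"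
    by (simp add: sum_distrib_left sum_distrib_right)
  also have "\<dots> = (\<Sum>\<theta>\<in>Pow E. Fg E a b c (\<lambda>A. real (card (agreeset V Q (pairs (orb rho) alpha A)))) ZU \<omega> \<theta>)"
    by (rule sum.cong) (simp_all add: Fg_def ZV_def Bw_def mult_ac)
  finally show ?thesis unfolding SP_def E_def V_def U_def c_def ZU_def .
qed

theorem proposition4p2:
  fixes D :: "'d set" and alpha rho :: "'d \<Rightarrow> 'd"
    and Q Q' :: "complex set" and q q' :: nat and a b :: real
    and xi1 xi2 :: "'d set set"
  assumes "comb_map D alpha rho"
    and "finite Q" and "uminus ` Q = Q" and "card Q = q" and "q \<ge> 1"
    and "finite Q'" and "uminus ` Q' = Q'" and "card Q' = q'" and "q' \<ge> 1"
    and "0 < a" and "a \<le> 1" and "0 < b" and "b \<le> 1"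
    and "a + b \<le> 1"
    and "xi1 \<subseteq> map_edges D alpha" and "xi2 \<subseteq> map_edges D alpha"
  shows "omega_marginal D alpha rho Q Q' a b (xi1 \<inter> xi2) *
           omega_marginal D alpha rho Q Q' a b (xi1 \<union> xi2)
         \<ge> omega_marginal D alpha rho Q Q' a b xi1 *
           omega_marginal D alpha rho Q Q' a b xi2"
proof -
  note cm = assms(1)
  have Q: "finite Q" "Q \<noteq> {}" using assms(2,4,5) by auto
  have Q': "finite Q'" "Q' \<noteq> {}" using assms(6,8,9) by auto
  define E where "E = map_edges D alpha"
  define V where "V = map_vertices D rho"
  define U where "U = map_faces D alpha rho"
  define SP where "SP = spin_pairs D alpha rho Q Q'"
  define f where "f A = real (card (agreeset V Q (pairs (orb rho) alpha A)))" for A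
  define g where "g A = real (card (agreeset U Q' (pairs (orb (rho \<circ> alpha)) alpha A)))" for A
  define F where "F = Fg E a b (1 - a - b) f g"
  define M where "M \<omega> = (\<Sum>(s, s')\<in>SP. spin_weight D alpha rho a b s s' * perc_cond D alpha rho a b s s' \<omega>)" for \<omega>
  define Zs where "Zs = (\<Sum>(t, t')\<in>SP. spin_weight D alpha rho a b t t')"
  have finE: "finite E" unfolding E_def using map_facts[OF cm] by simp
  have x1: "xi1 \<subseteq> E" and x2: "xi2 \<subseteq> E" using assms(15,16) unfolding E_def by auto
  have x3: "xi1 \<inter> xi2 \<subseteq> E" and x4: "xi1 \<union> xi2 \<subseteq> E" using x1 x2 by auto
  have abc: "0 \<le> a" "0 \<le> b" "0 \<le> 1 - a - b" using assms(10,12,14) by auto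
  have fnn: "\<And>A. A \<subseteq> E \<Longrightarrow> 0 \<le> f A" and gnn: "\<And>A. A \<subseteq> E \<Longrightarrow> 0 \<le> g A"
    unfolding f_def g_def by auto
  have fs: "f A * f B \<le> f (A \<inter> B) * f (A \<union> B)" if "A \<subseteq> E" "B \<subseteq> E" for A B
  proof -
    have "card (agreeset V Q (pairs (orb rho) alpha A)) * card (agreeset V Q (pairs (orb rho) alpha B))
        \<le> card (agreeset V Q (pairs (orb rho) alpha (A \<inter> B))) * card (agreeset V Q (pairs (orb rho) alpha (A \<union> B)))"
      unfolding V_def
      by (rule Z_supermod[where pm="orb rho" and alpha=alpha, OF map_facts(2)[OF cm] Q map_facts(5)[OF cm] map_facts(4)[OF cm]])
        (use that in \<open>simp_all add: E_def\<close>)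
    then show ?thesis unfolding f_def by (metis of_nat_mono of_nat_mult)
  qed
  have gs: "g A * g B \<le> g (A \<inter> B) * g (A \<union> B)" if "A \<subseteq> E" "B \<subseteq> E" for A B
  proof -
    have "card (agreeset U Q' (pairs (orb (rho \<circ> alpha)) alpha A)) * card (agreeset U Q' (pairs (orb (rho \<circ> alpha)) alpha B))
        \<le> card (agreeset U Q' (pairs (orb (rho \<circ> alpha)) alpha (A \<inter> B))) * card (agreeset U Q' (pairs (orb (rho \<circ> alpha)) alpha (A \<union> B)))"
      unfolding U_def
      by (rule Z_supermod[where pm="orb (rho \<circ> alpha)" and alpha=alpha, OF map_facts(3)[OF cm] Q' map_facts(6)[OF cm] map_facts(4)[OF cm]])
        (use that in \<open>simp_all add: E_def\<close>)
    then show ?thesis unfolding g_def by (metis of_nat_mono of_nat_mult)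
  qed
  have MF: "M \<omega> = sum (F \<omega>) (Pow E)" if "\<omega> \<subseteq> E" for \<omega>
    unfolding M_def F_def SP_def E_def f_def g_def V_def U_def
    by (rule key_decomp[OF cm Q(1) Q'(1)]) (use that in \<open>simp add: E_def\<close>)
  have OM: "omega_marginal D alpha rho Q Q' a b \<omega> = M \<omega> / Zs" for \<omega>
  proof -
    have "omega_marginal D alpha rho Q Q' a b \<omega>
        = (\<Sum>(s, s')\<in>SP. spin_weight D alpha rho a b s s' * perc_cond D alpha rho a b s s' \<omega> / Zs)"
      unfolding omega_marginal_def spin_law_def SP_def Zs_def
      by (rule sum.cong) auto
    also have "\<dots> = M \<omega> / Zs" unfolding M_def by (simp add: sum_divide_distrib case_prod_beta)
    finally show ?thesis .
  qed
  have AD': "sum (F xi1) (Pow E) * sum (F xi2) (Pow E) \<le> sum (F (xi1 \<inter> xi2)) (Pow E) * sum (F (xi1 \<union> xi2)) (Pow E)"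
  proof (rule AD[OF finE])
    fix A B assume "A \<subseteq> E" "B \<subseteq> E"
    show "F xi1 A * F xi2 B \<le> F (xi1 \<inter> xi2) (A \<inter> B) * F (xi1 \<union> xi2) (A \<union> B)"
      unfolding F_def by (rule Fg_lsm[OF abc finE fnn gnn fs gs x1 x2])
  next
    fix A assume "A \<subseteq> E"
    show "0 \<le> F xi1 A \<and> 0 \<le> F xi2 A \<and> 0 \<le> F (xi1 \<inter> xi2) A \<and> 0 \<le> F (xi1 \<union> xi2) A"
      unfolding F_def using Fg_nonneg[of a b "1 - a - b" E f g, OF abc fnn gnn] x1 x2 x3 x4 by blast
  qed
  then have MM: "M xi1 * M xi2 \<le> M (xi1 \<inter> xi2) * M (xi1 \<union> xi2)"
    using MF[OF x1] MF[OF x2] MF[OF x3] MF[OF x4] by simp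
  have "M xi1 / Zs * (M xi2 / Zs) = (M xi1 * M xi2) / (Zs * Zs)" by simp
  also have "\<dots> \<le> (M (xi1 \<inter> xi2) * M (xi1 \<union> xi2)) / (Zs * Zs)"
    by (rule divide_right_mono[OF MM]) simp
  also have "\<dots> = M (xi1 \<inter> xi2) / Zs * (M (xi1 \<union> xi2) / Zs)" by simp
  finally show ?thesis unfolding OM by simp
qed

end
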